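(* (1) For all integers $q \geq s \geq 2$, $R(s,q) \leq 2^{q-1}$, and for $s=2$ equality holds, i.e. $R(2,q)=2^{q-1}$ for all $q \ge 2$. (2) For every fixed integer $s \ge 2$, $R(s,q) \geq (2-o(1))^q$, where the $o(1)$-term tends to $0$ as $q \to \infty$; that is, for every $s\ge 2$ and $\delta>0$ there exists $q_0$ such that $R(s,q) \ge (2-\delta)^q$ for all $q \ge q_0$.
   Context: Let $Z_s$ be the ring of integers modulo $s$. For $A \subseteq Z_s$, a vector $v=(v_1,\dots,v_q)\in Z_s^q$ is $A$-covering if for every $a \in A$ there is $1 \le i \le q$ with $v_i = a$. A family $\mathcal{F} \subseteq Z_s^q$ is $A$-covering if for every ordered pair of distinct vectors $u,v \in \mathcal{F}$ the difference $u-v$ is $A$-covering; it is covering if it is $Z_s$-covering. $R(s,q)$ denotes the maximum possible cardinality of a covering family in $Z_s^q$. *)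

theory Defs
  imports Complex_Main
begin

text \<open>Vectors of Z_s^q are represented as functions v :: nat => nat with
  v i < s for i < q (entries as residues 0..s-1) and v i = 0 for i >= q.\<close>
definition vecs :: "nat \<Rightarrow> nat \<Rightarrow> (nat \<Rightarrow> nat) set" where
  "vecs s q = {v. (\<forall>i<q. v i < s) \<and> (\<forall>i\<ge>q. v i = 0)}"

definition vdiff :: "nat \<Rightarrow> (nat \<Rightarrow> nat) \<Rightarrow> (nat \<Rightarrow> nat) \<Rightarrow> nat \<Rightarrow> nat" where
  "vdiff s u v = (\<lambda>i. nat ((int (u i) - int (v i)) mod int s))"

definition A_covering :: "nat set \<Rightarrow> nat \<Rightarrow> (nat \<Rightarrow> nat) \<Rightarrow> bool" where
  "A_covering A q w = (\<forall>a\<in>A. \<exists>i<q. w i = a)"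

definition covering_family :: "nat \<Rightarrow> nat \<Rightarrow> (nat \<Rightarrow> nat) set \<Rightarrow> bool" where
  "covering_family s q F = (F \<subseteq> vecs s q \<and>
     (\<forall>u\<in>F. \<forall>v\<in>F. u \<noteq> v \<longrightarrow> A_covering {0..<s} q (vdiff s u v)))"

definition R :: "nat \<Rightarrow> nat \<Rightarrow> nat" where
  "R s q = Max (card ` {F. covering_family s q F})"

end

theory Submission
  imports Defs "HOL-Library.FuncSet" "HOL-Library.Function_Algebras"
begin

definition box :: "'a set \<Rightarrow> ('a \<Rightarrow> nat set) \<Rightarrow> ('a \<Rightarrow> nat) set" where
  "box I A = {f. (\<forall>i\<in>I. f i \<in> A i) \<and> (\<forall>i. i \<notin> I \<longrightarrow> f i = 0)}"

lemma box_bij: "bij_betw (\<lambda>f. restrict f I) (box I A) (PiE I A)"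
proof (rule bij_betw_byWitness[where f'="\<lambda>g i. if i \<in> I then g i else 0"])
  show "\<forall>a\<in>box I A. (\<lambda>i. if i \<in> I then restrict a I i else 0) = a"
    by (auto simp: box_def fun_eq_iff)
  show "\<forall>a'\<in>PiE I A. restrict (\<lambda>i. if i \<in> I then a' i else 0) I = a'"
    by (auto simp: fun_eq_iff PiE_def extensional_def)
  show "(\<lambda>f. restrict f I) ` box I A \<subseteq> PiE I A"
    by (auto simp: box_def)
  show "(\<lambda>g i. if i \<in> I then g i else 0) ` PiE I A \<subseteq> box I A"
    by (auto simp: box_def PiE_def Pi_def)
qed

lemma card_box: "finite I \<Longrightarrow> card (box I A) = (\<Prod>i\<in>I. card (A i))"
  using bij_betw_same_card[OF box_bij[of I A]] card_PiE by simp

lemma finite_box: "finite I \<Longrightarrow> (\<And>i. i \<in> I \<Longrightarrow> finite (A i)) \<Longrightarrow> finite (box I A)"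
  using bij_betw_finite[OF box_bij[of I A]] finite_PiE by blast

lemma vecs_box: "vecs s q = box {0..<q} (\<lambda>_. {0..<s})"
  by (auto simp: vecs_def box_def)

lemma finite_vecs: "finite (vecs s q)"
  by (simp add: vecs_box finite_box)

lemma card_vecs: "card (vecs s q) = s ^ q"
  by (simp add: vecs_box card_box)

lemma finite_cov_fams: "finite {F. covering_family s q F}"
proof -
  have "{F. covering_family s q F} \<subseteq> Pow (vecs s q)"
    by (auto simp: covering_family_def)
  then show ?thesis using finite_vecs finite_subset by blast
qed

lemma R_ge: "covering_family s q F \<Longrightarrow> card F \<le> R s q"
  unfolding R_def using finite_cov_fams by (intro Max_ge) auto

lemma R_attained: "\<exists>F. covering_family s q F \<and> card F = R s q"
proof -
  have "covering_family s q {}" by (simp add: covering_family_def)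
  then have "card ` {F. covering_family s q F} \<noteq> {}" by blast
  then have "R s q \<in> card ` {F. covering_family s q F}"
    unfolding R_def using finite_cov_fams by (intro Max_in) auto
  then show ?thesis by auto
qed

lemma R_ge1: assumes "0 < s" shows "1 \<le> R s q"
proof -
  have "covering_family s q {\<lambda>_. 0}"
    using assms by (auto simp: covering_family_def vecs_def)
  from R_ge[OF this] show ?thesis by simp
qed

lemma transfer:
  fixes U :: "'x \<Rightarrow> 'c \<Rightarrow> int"
  assumes s2: "2 \<le> s" and finC: "finite C" and q: "card C \<le> q" and finA: "finite A"
    and cov: "\<And>x x' a. x \<in> A \<Longrightarrow> x' \<in> A \<Longrightarrow> x \<noteq> x' \<Longrightarrow> a < s \<Longrightarrow>
               \<exists>c\<in>C. (U x c - U x' c) mod int s = int a"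
  shows "card A \<le> R s q"
proof -
  obtain e where e: "bij_betw e {0..<card C} C" using ex_bij_betw_nat_finite[OF finC] by blast
  define vec where "vec x = (\<lambda>i. if i < card C then nat (U x (e i) mod int s) else 0)" for x
  have vin: "vec x \<in> vecs s q" for x
  proof -
    have "nat (U x (e i) mod int s) < s" for i
      using s2 by (simp add: nat_less_iff)
    then show ?thesis using q s2 by (auto simp: vecs_def vec_def)
  qed
  have vd: "vdiff s (vec x) (vec x') i = nat ((U x (e i) - U x' (e i)) mod int s)" if "i < card C" for x x' i
    using that s2 by (simp add: vdiff_def vec_def mod_diff_eq)
  have covv: "A_covering {0..<s} q (vdiff s (vec x) (vec x'))"
    if xa: "x \<in> A" "x' \<in> A" "x \<noteq> x'" for x x'
    unfolding A_covering_def
  proof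
    fix a assume "a \<in> {0..<s}"
    then obtain c where c: "c \<in> C" "(U x c - U x' c) mod int s = int a"
      using cov[OF xa] \<open>a \<in> {0..<s}\<close> by auto
    obtain i where i: "i < card C" "e i = c"
      using e c(1) unfolding bij_betw_def by (metis atLeastLessThan_iff imageE)
    show "\<exists>i<q. vdiff s (vec x) (vec x') i = a"
      using i q c vd[OF i(1), of x x'] by (intro exI[of _ i]) auto
  qed
  have inj: "inj_on vec A"
  proof
    fix x x' assume xx: "x \<in> A" "x' \<in> A" "vec x = vec x'"
    show "x = x'"
    proof (rule ccontr)
      assume "x \<noteq> x'"
      from covv[OF xx(1,2) this] obtain i where "i < q" "vdiff s (vec x) (vec x') i = 1"
        using s2 unfolding A_covering_def by fastforce
      with xx(3) show False by (simp add: vdiff_def)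
    qed
  qed
  have "covering_family s q (vec ` A)"
    unfolding covering_family_def using vin covv by blast
  from R_ge[OF this] inj show ?thesis by (simp add: card_image)
qed


definition ee :: "nat \<Rightarrow> int \<Rightarrow> complex" where
  "ee s k = cis (2 * pi * of_int k / of_nat s)"

lemma ee_add: "ee s (a + b) = ee s a * ee s b"
  by (simp add: ee_def cis_mult add_divide_distrib distrib_left)

lemma ee_0[simp]: "ee s 0 = 1"
  by (simp add: ee_def)

lemma ee_sum: "finite S \<Longrightarrow> ee s (\<Sum>i\<in>S. f i) = (\<Prod>i\<in>S. ee s (f i))"
  by (induction S rule: finite_induct) (auto simp: ee_add)

lemma ee_dvd: assumes "0 < s" "int s dvd k" shows "ee s k = 1"
proof -
  from assms(2) obtain t where t: "k = int s * t" by (auto elim: dvdE)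
  have "2 * pi * of_int k / of_nat s = 2 * pi * of_int t"
    using assms(1) by (simp add: t field_simps)
  then show ?thesis by (simp add: ee_def)
qed

lemma ee_eq_1: assumes "0 < s" "ee s k = 1" shows "int s dvd k"
proof -
  have "cos (2 * pi * of_int k / of_nat s) = 1"
    using assms(2) unfolding ee_def by (metis cis.sel(1) one_complex.sel(1))
  then obtain n :: int where n: "2 * pi * of_int k / of_nat s = of_int n * 2 * pi"
    using cos_one_2pi_int by blast
  then have "of_int k = (of_int n * of_nat s :: real)"
    using assms(1) by (simp add: field_simps)
  then have "k = n * int s" by (metis of_int_eq_iff of_int_mult of_int_of_nat_eq)
  then show ?thesis by simp
qed

lemma ee_pow: "ee s (int a * k) = (ee s k) ^ a"
  by (induction a) (auto simp: ee_add distrib_right)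

lemma ee_geom:
  assumes "0 < s"
  shows "(\<Sum>a<s. ee s (int a * k)) = (if int s dvd k then of_nat s else 0)"
proof (cases "int s dvd k")
  case True
  then have "ee s (int a * k) = 1" for a using assms by (intro ee_dvd) auto
  then show ?thesis using True by simp
next
  case False
  then have ne: "ee s k \<noteq> 1" using ee_eq_1 assms by blast
  have "ee s k ^ s = 1" using ee_pow[of s s k] ee_dvd[OF assms, of "int s * k"] by simp
  then have "(\<Sum>a<s. ee s k ^ a) = 0" using ne by (simp add: sum_gp_strict)
  then show ?thesis using False by (simp add: ee_pow)
qed

definition Mr :: "nat \<Rightarrow> nat \<Rightarrow> int \<Rightarrow> (nat \<Rightarrow> nat) \<Rightarrow> (nat \<Rightarrow> nat) \<Rightarrow> complex" where
  "Mr s q r u v = (\<Sum>a<s. ee s (int a * r) * (\<Prod>i<q. (1 - ee s (int (u i) - int (v i) - int a))))"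

lemma Mr_zero:
  assumes s: "0 < s" and cov: "A_covering {0..<s} q (vdiff s u v)"
  shows "Mr s q r u v = 0"
  unfolding Mr_def
proof (rule sum.neutral, rule ballI)
  fix a assume "a \<in> {..<s}"
  then have "a \<in> {0..<s}" by simp
  then obtain i where i: "i < q" "vdiff s u v i = a" using cov unfolding A_covering_def by blast
  then have "nat ((int (u i) - int (v i)) mod int s) = a"
    by (simp add: vdiff_def)
  moreover have "0 \<le> (int (u i) - int (v i)) mod int s" using s by simp
  ultimately have "(int (u i) - int (v i)) mod int s = int a" by linarith
  then have "int s dvd (int (u i) - int (v i) - int a)"
    by (metis mod_eq_dvd_iff mod_mod_trivial)
  then have "1 - ee s (int (u i) - int (v i) - int a) = 0" using ee_dvd[OF s] by simp
  then have "(\<Prod>i<q. (1 - ee s (int (u i) - int (v i) - int a))) = 0"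
    using i(1) by (intro prod_zero) auto
  then show "ee s (int a * r) * (\<Prod>i<q. (1 - ee s (int (u i) - int (v i) - int a))) = 0" by simp
qed

lemma Mr_diag: "Mr s q r u u = (\<Sum>a<s. ee s (int a * r) * (1 - ee s (- int a)) ^ q)"
  by (simp add: Mr_def)

definition SS :: "nat \<Rightarrow> nat \<Rightarrow> int \<Rightarrow> nat set set" where
  "SS s q r = {S \<in> Pow {..<q}. int s dvd (r - int (card S))}"

lemma Mr_expand:
  assumes s: "0 < s"
  shows "Mr s q r u v = (\<Sum>S\<in>SS s q r. of_nat s * (-1) ^ card S * ee s (\<Sum>i\<in>S. int (u i))
                                          * ee s (- (\<Sum>i\<in>S. int (v i))))"
proof -
  define d where "d i = int (u i) - int (v i)" for i
  have prodexp: "(\<Prod>i<q. (1 - ee s (d i - int a))) =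
        (\<Sum>S\<in>Pow {..<q}. (-1) ^ card S * ee s (\<Sum>i\<in>S. d i) * ee s (int a * (- int (card S))))" for a
  proof -
    have "(\<Prod>i<q. (1 - ee s (d i - int a))) = (\<Prod>i<q. (- ee s (d i - int a)) + 1)" by simp
    also have "\<dots> = (\<Sum>S\<in>Pow {..<q}. (\<Prod>i\<in>S. - ee s (d i - int a)) * (\<Prod>i\<in>{..<q} - S. 1))"
      by (rule prod_add) simp
    also have "\<dots> = (\<Sum>S\<in>Pow {..<q}. (-1) ^ card S * ee s (\<Sum>i\<in>S. d i) * ee s (int a * (- int (card S))))"
    proof (rule sum.cong[OF refl])
      fix S assume "S \<in> Pow {..<q}"
      then have fS: "finite S" by (auto intro: finite_subset)
      have "(\<Prod>i\<in>S. - ee s (d i - int a)) = (\<Prod>i\<in>S. (-1) * ee s (d i - int a))" by simp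
      also have "\<dots> = (-1) ^ card S * (\<Prod>i\<in>S. ee s (d i - int a))"
        by (simp only: prod.distrib prod_constant)
      also have "(\<Prod>i\<in>S. ee s (d i - int a)) = ee s (\<Sum>i\<in>S. (d i - int a))"
        using ee_sum[OF fS] by simp
      also have "(\<Sum>i\<in>S. (d i - int a)) = (\<Sum>i\<in>S. d i) + int a * (- int (card S))"
        by (simp add: sum_subtractf)
      also have "ee s ((\<Sum>i\<in>S. d i) + int a * (- int (card S))) =
            ee s (\<Sum>i\<in>S. d i) * ee s (int a * (- int (card S)))" by (rule ee_add)
      finally show "(\<Prod>i\<in>S. - ee s (d i - int a)) * (\<Prod>i\<in>{..<q} - S. 1) =
          (-1) ^ card S * ee s (\<Sum>i\<in>S. d i) * ee s (int a * (- int (card S)))"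
        by (simp add: mult.assoc)
    qed
    finally show ?thesis .
  qed
  have "Mr s q r u v = (\<Sum>a<s. ee s (int a * r) *
        (\<Sum>S\<in>Pow {..<q}. (-1) ^ card S * ee s (\<Sum>i\<in>S. d i) * ee s (int a * (- int (card S)))))"
    unfolding Mr_def using prodexp by (simp add: d_def)
  also have "\<dots> = (\<Sum>S\<in>Pow {..<q}. (-1) ^ card S * ee s (\<Sum>i\<in>S. d i) *
        (\<Sum>a<s. ee s (int a * (r - int (card S)))))"
    by (simp add: sum_distrib_left sum_distrib_right sum.swap[of _ "{..<s}"] ee_add[symmetric]
        algebra_simps)
  also have "\<dots> = (\<Sum>S\<in>Pow {..<q}. if int s dvd (r - int (card S)) then
        of_nat s * (-1) ^ card S * ee s (\<Sum>i\<in>S. d i) else 0)"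
    by (rule sum.cong[OF refl]) (simp add: ee_geom[OF s])
  also have "\<dots> = (\<Sum>S\<in>SS s q r. of_nat s * (-1) ^ card S * ee s (\<Sum>i\<in>S. d i))"
    unfolding SS_def by (simp add: sum.inter_filter[symmetric])
  also have "\<dots> = (\<Sum>S\<in>SS s q r. of_nat s * (-1) ^ card S * ee s (\<Sum>i\<in>S. int (u i))
                                          * ee s (- (\<Sum>i\<in>S. int (v i))))"
    by (simp add: d_def sum_subtractf ee_add[symmetric] mult.assoc)
  finally show ?thesis .
qed


definition Dg :: "nat \<Rightarrow> nat \<Rightarrow> int \<Rightarrow> complex" where
  "Dg s q r = (\<Sum>a<s. ee s (int a * r) * (1 - ee s (- int a)) ^ q)"

lemma Mr_diag': "Mr s q r u u = Dg s q r"
  by (simp add: Mr_def Dg_def)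

lemma exists_r:
  assumes s: "2 \<le> s"
  shows "\<exists>r. Dg s q r \<noteq> 0"
proof (rule ccontr)
  assume "\<not> ?thesis"
  then have z: "Dg s q r = 0" for r by blast
  have s0: "0 < s" using s by simp
  have "(\<Sum>r<s. ee s (- int r) * Dg s q (int r)) =
        (\<Sum>r<s. \<Sum>a<s. ee s (- int r) * (ee s (int a * int r) * (1 - ee s (- int a)) ^ q))"
    unfolding Dg_def by (simp add: sum_distrib_left)
  also have "\<dots> = (\<Sum>a<s. \<Sum>r<s. ee s (- int r) * (ee s (int a * int r) * (1 - ee s (- int a)) ^ q))"
    by (rule sum.swap)
  also have "\<dots> = (\<Sum>a<s. (1 - ee s (- int a)) ^ q * (\<Sum>r<s. ee s (int r * (int a - 1))))"
  proof (rule sum.cong[OF refl])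
    fix a assume "a \<in> {..<s}"
    have e: "ee s (int r * (int a - 1)) = ee s (- int r) * ee s (int a * int r)" for r
    proof -
      have "int r * (int a - 1) = - int r + int a * int r" by (simp add: algebra_simps)
      then show ?thesis by (simp only: ee_add)
    qed
    have "(\<Sum>r<s. ee s (- int r) * (ee s (int a * int r) * (1 - ee s (- int a)) ^ q)) =
          (\<Sum>r<s. (1 - ee s (- int a)) ^ q * ee s (int r * (int a - 1)))"
      by (rule sum.cong[OF refl]) (simp only: e mult_ac)
    then show "(\<Sum>r<s. ee s (- int r) * (ee s (int a * int r) * (1 - ee s (- int a)) ^ q)) =
          (1 - ee s (- int a)) ^ q * (\<Sum>r<s. ee s (int r * (int a - 1)))"
      by (simp add: sum_distrib_left)
  qed
  also have "\<dots> = (\<Sum>a<s. if a = 1 then (1 - ee s (- int a)) ^ q * of_nat s else 0)"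
  proof (rule sum.cong[OF refl])
    fix a assume a: "a \<in> {..<s}"
    have "int s dvd (int a - 1) \<longleftrightarrow> a = 1"
    proof
      assume d: "int s dvd (int a - 1)"
      show "a = 1"
      proof (rule ccontr)
        assume "a \<noteq> 1"
        then have "int a - 1 \<noteq> 0" by simp
        moreover have "\<bar>int a - 1\<bar> < int s" using a s by auto
        ultimately show False using dvd_imp_le_int[OF \<open>int a - 1 \<noteq> 0\<close> d] by simp
      qed
    qed simp
    then show "(1 - ee s (- int a)) ^ q * (\<Sum>r<s. ee s (int r * (int a - 1))) =
        (if a = 1 then (1 - ee s (- int a)) ^ q * of_nat s else 0)"
      by (simp add: ee_geom[OF s0])
  qed
  also have "\<dots> = (1 - ee s (- 1)) ^ q * of_nat s"
    using s by (simp add: sum.delta)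
  finally have eq: "(\<Sum>r<s. ee s (- int r) * Dg s q (int r)) = (1 - ee s (- 1)) ^ q * of_nat s" .
  have "ee s (-1) \<noteq> 1"
  proof
    assume "ee s (-1) = 1"
    then have "int s dvd -1" using ee_eq_1[OF s0] by blast
    then show False using s by simp
  qed
  then have "(1 - ee s (- 1)) ^ q * of_nat s \<noteq> 0" using s0 by simp
  moreover have "(\<Sum>r<s. ee s (- int r) * Dg s q (int r)) = 0" by (simp add: z)
  ultimately show False using eq by simp
qed

lemma card_SS: assumes "2 \<le> s" shows "card (SS s q r) \<le> 2 ^ (q - 1)"
proof -
  have inj: "inj_on (\<lambda>S. S - {q - 1}) (SS s q r)"
  proof
    fix S S' assume S: "S \<in> SS s q r" and S': "S' \<in> SS s q r" and eq: "S - {q - 1} = S' - {q - 1}"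
    show "S = S'"
    proof (rule ccontr)
      assume ne: "S \<noteq> S'"
      have fin: "finite S" "finite S'" using S S' by (auto simp: SS_def intro: finite_subset)
      have d1: "int s dvd (r - int (card S))" "int s dvd (r - int (card S'))"
        using S S' by (auto simp: SS_def)
      have "(q - 1 \<in> S \<and> q - 1 \<notin> S') \<or> (q - 1 \<notin> S \<and> q - 1 \<in> S')"
        using eq ne by blast
      then have "card S = card S' + 1 \<or> card S' = card S + 1"
      proof
        assume h: "q - 1 \<in> S \<and> q - 1 \<notin> S'"
        then have "S = insert (q - 1) S'" using eq by blast
        then show ?thesis using h fin by simp
      next
        assume h: "q - 1 \<notin> S \<and> q - 1 \<in> S'"
        then have "S' = insert (q - 1) S" using eq by blast
        then show ?thesis using h fin by simp
      qed
      moreover have "int s dvd (int (card S) - int (card S'))"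
        using dvd_diff[OF d1(2) d1(1)] by (simp add: algebra_simps)
      ultimately have "int s dvd 1" by (auto simp: dvd_minus_iff)
      then show False using assms by simp
    qed
  qed
  have sub: "(\<lambda>S. S - {q - 1}) ` SS s q r \<subseteq> Pow {..<q - 1}"
    by (auto simp: SS_def)
  have "card (SS s q r) = card ((\<lambda>S. S - {q - 1}) ` SS s q r)" using inj by (simp add: card_image)
  also have "\<dots> \<le> card (Pow {..<q - 1})" using sub by (intro card_mono) auto
  also have "\<dots> = 2 ^ (q - 1)" by (simp add: card_Pow)
  finally show ?thesis .
qed

lemma sum_fun_apply: "(\<Sum>x\<in>A. f x) y = (\<Sum>x\<in>A. f x y)"
  by (induction A rule: infinite_finite_induct) auto

definition fsc :: "complex \<Rightarrow> ((nat \<Rightarrow> nat) \<Rightarrow> complex) \<Rightarrow> ((nat \<Rightarrow> nat) \<Rightarrow> complex)" where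
  "fsc c f = (\<lambda>x. c * f x)"

lemma upper_bound:
  assumes s: "2 \<le> s" and F: "covering_family s q F"
  shows "card F \<le> 2 ^ (q - 1)"
proof -
  interpret fvs: vector_space fsc
    by unfold_locales (auto simp: fsc_def fun_eq_iff algebra_simps)
  have s0: "0 < s" using s by simp
  obtain r where Dr: "Dg s q r \<noteq> 0" using exists_r[OF s] by blast
  have finF: "finite F" using F finite_vecs finite_subset unfolding covering_family_def by blast
  define g where "g u = (\<lambda>v. Mr s q r u v)" for u
  define b where "b S = (\<lambda>v::nat\<Rightarrow>nat. ee s (- (\<Sum>i\<in>S. int (v i))))" for S
  have g0: "g u v = 0" if "u \<in> F" "v \<in> F" "u \<noteq> v" for u v
    unfolding g_def using F that by (intro Mr_zero[OF s0]) (auto simp: covering_family_def)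
  have gd: "g u u = Dg s q r" for u by (simp add: g_def Mr_diag')
  have gsum: "g u = (\<Sum>S\<in>SS s q r. fsc (of_nat s * (-1) ^ card S * ee s (\<Sum>i\<in>S. int (u i))) (b S))" for u
    by (simp add: fun_eq_iff g_def Mr_expand[OF s0] sum_fun_apply fsc_def b_def)
  have gspan: "g u \<in> fvs.span (b ` SS s q r)" for u
    unfolding gsum by (intro fvs.span_sum fvs.span_scale fvs.span_base) auto
  have span: "g ` F \<subseteq> fvs.span (b ` SS s q r)"
    using gspan by blast
  have indep: "fvs.independent (g ` F)"
    unfolding fvs.independent_explicit_finite_subsets
  proof (intro allI impI ballI)
    fix S c v0 assume S: "S \<subseteq> g ` F" "finite S" and sumz: "(\<Sum>v\<in>S. fsc (c v) v) = 0" and v0: "v0 \<in> S"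
    obtain u0 where u0: "u0 \<in> F" "v0 = g u0" using S v0 by blast
    have "0 = (\<Sum>v\<in>S. fsc (c v) v) u0" using sumz by simp
    also have "\<dots> = (\<Sum>v\<in>S. c v * v u0)" by (simp add: sum_fun_apply fsc_def)
    also have "\<dots> = c v0 * v0 u0 + (\<Sum>v\<in>S - {v0}. c v * v u0)"
      using S(2) v0 by (simp add: sum.remove)
    also have "(\<Sum>v\<in>S - {v0}. c v * v u0) = 0"
    proof (rule sum.neutral, rule ballI)
      fix v assume v: "v \<in> S - {v0}"
      then obtain u' where u': "u' \<in> F" "v = g u'" using S by blast
      have "u' \<noteq> u0" using u' u0 v by auto
      then show "c v * v u0 = 0" using g0[OF u'(1) u0(1)] u' by simp
    qed
    finally have "c v0 * Dg s q r = 0" using gd u0 by simp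
    then show "c v0 = 0" using Dr by simp
  qed
  have injg: "inj_on g F"
  proof
    fix u u' assume uu: "u \<in> F" "u' \<in> F" "g u = g u'"
    show "u = u'"
    proof (rule ccontr)
      assume "u \<noteq> u'"
      then have "g u' u = 0" using g0[OF uu(2) uu(1)] by simp
      moreover have "g u u = Dg s q r" by (rule gd)
      ultimately show False using uu(3) Dr by simp
    qed
  qed
  have finSS: "finite (SS s q r)"
    by (rule finite_subset[of _ "Pow {..<q}"]) (auto simp: SS_def)
  have "finite (g ` F) \<and> card (g ` F) \<le> card (b ` SS s q r)"
    by (rule fvs.independent_span_bound[OF finite_imageI[OF finSS] indep span])
  then have "card (g ` F) \<le> card (b ` SS s q r)" by blast
  also have "\<dots> \<le> card (SS s q r)" by (rule card_image_le[OF finSS])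
  also have "\<dots> \<le> 2 ^ (q - 1)" by (rule card_SS[OF s])
  finally show ?thesis using injg by (simp add: card_image)
qed

lemma R_upper: "2 \<le> s \<Longrightarrow> R s q \<le> 2 ^ (q - 1)"
proof -
  assume "2 \<le> s"
  obtain F where "covering_family s q F" "card F = R s q" using R_attained by blast
  then show ?thesis using upper_bound[OF \<open>2 \<le> s\<close>] by metis
qed


definition code :: "nat \<Rightarrow> nat \<Rightarrow> (nat \<Rightarrow> nat) \<Rightarrow> nat" where
  "code B d p = (\<Sum>i<d. p i * B ^ i)"

lemma code_upd0:
  assumes "i < d"
  shows "code B d (p(i := v)) = code B d (p(i := 0)) + v * B ^ i"
proof -
  have "code B d (p(i := v)) = (p(i := v)) i * B ^ i + (\<Sum>k\<in>{..<d} - {i}. (p(i := v)) k * B ^ k)"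
    unfolding code_def using assms by (subst sum.remove[of _ i]) auto
  moreover have "code B d (p(i := 0)) = (p(i := 0)) i * B ^ i + (\<Sum>k\<in>{..<d} - {i}. (p(i := 0)) k * B ^ k)"
    unfolding code_def using assms by (subst sum.remove[of _ i]) auto
  moreover have "(\<Sum>k\<in>{..<d} - {i}. (p(i := v)) k * B ^ k) = (\<Sum>k\<in>{..<d} - {i}. (p(i := 0)) k * B ^ k)"
    by (rule sum.cong) auto
  ultimately show ?thesis by simp
qed

lemma code_upd_self: "i < d \<Longrightarrow> code B d p = code B d (p(i := 0)) + p i * B ^ i"
  using code_upd0[of i d B p "p i"] by simp

lemma code_lt: "(\<forall>i<d. p i < B) \<Longrightarrow> code B d p < B ^ d"
proof (induction d)
  case 0 then show ?case by (simp add: code_def)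
next
  case (Suc d)
  have "code B (Suc d) p = code B d p + p d * B ^ d" by (simp add: code_def)
  also have "\<dots> < B ^ d + p d * B ^ d" using Suc by simp
  also have "\<dots> = (p d + 1) * B ^ d" by simp
  also have "\<dots> \<le> B * B ^ d" using Suc.prems by (intro mult_right_mono) auto
  finally show ?case by simp
qed

lemma code_inj_aux:
  "(\<forall>i<d. p i < B) \<Longrightarrow> (\<forall>i<d. p' i < B) \<Longrightarrow> code B d p = code B d p' \<Longrightarrow> (\<forall>i<d. p i = p' i)"
proof (induction d)
  case 0 then show ?case by simp
next
  case (Suc d)
  have B0: "0 < B" using Suc.prems(1) by (metis gr_zeroI less_nat_zero_code zero_less_Suc)
  have e1: "code B (Suc d) p = code B d p + p d * B ^ d" by (simp add: code_def)
  have e2: "code B (Suc d) p' = code B d p' + p' d * B ^ d" by (simp add: code_def)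
  have l1: "code B d p < B ^ d" using Suc.prems(1) by (intro code_lt) auto
  have l2: "code B d p' < B ^ d" using Suc.prems(2) by (intro code_lt) auto
  have "(code B d p + p d * B ^ d) div B ^ d = p d" using l1 B0 by simp
  moreover have "(code B d p' + p' d * B ^ d) div B ^ d = p' d" using l2 B0 by simp
  ultimately have pd: "p d = p' d" using Suc.prems(3) e1 e2 by metis
  then have "code B d p = code B d p'" using Suc.prems(3) e1 e2 by simp
  then have "\<forall>i<d. p i = p' i" using Suc.IH Suc.prems(1,2) by auto
  then show ?case using pd less_Suc_eq by auto
qed

definition Vd :: "nat \<Rightarrow> nat \<Rightarrow> (nat \<Rightarrow> nat) set" where
  "Vd d N = {p. (\<forall>i<d. 1 \<le> p i \<and> p i \<le> N) \<and> (\<forall>i. d \<le> i \<longrightarrow> p i = 0)}"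

definition Wd :: "nat \<Rightarrow> nat \<Rightarrow> (nat \<Rightarrow> nat) set" where
  "Wd d N = {p. (\<forall>i<d. p i \<le> N) \<and> (\<forall>i. d \<le> i \<longrightarrow> p i = 0)}"

lemma Vd_box: "Vd d N = box {0..<d} (\<lambda>_. {1..N})"
  by (auto simp: Vd_def box_def)

lemma Wd_box: "Wd d N = box {0..<d} (\<lambda>_. {0..N})"
  by (auto simp: Wd_def box_def)

lemma card_Vd: "card (Vd d N) = N ^ d" by (simp add: Vd_box card_box)
lemma card_Wd: "card (Wd d N) = (N + 1) ^ d" by (simp add: Wd_box card_box)
lemma finite_Vd: "finite (Vd d N)" by (simp add: Vd_box finite_box)
lemma finite_Wd: "finite (Wd d N)" by (simp add: Wd_box finite_box)

definition elem :: "(nat \<Rightarrow> nat) \<Rightarrow> nat \<Rightarrow> (nat \<Rightarrow> nat)" where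
  "elem w k = (if k = 0 then w else w(k - 1 := w (k - 1) + 1))"

definition corner :: "(nat \<Rightarrow> nat) \<Rightarrow> nat \<Rightarrow> (nat \<Rightarrow> nat)" where
  "corner j k = (if k = 0 then j else j(k - 1 := j (k - 1) - 1))"

definition rho :: "nat \<Rightarrow> nat \<Rightarrow> nat \<Rightarrow> (nat \<Rightarrow> nat) \<Rightarrow> nat" where
  "rho B d k p = (if k = 0 then code B d p else code B d (p(k - 1 := B - 1 - p (k - 1))))"

lemma Vd_eq:
  assumes "p \<in> Vd d N" "p' \<in> Vd d N" "\<forall>t<d. p t = p' t"
  shows "p = p'"
proof
  fix t show "p t = p' t"
  proof (cases "t < d")
    case False
    then show ?thesis using assms(1,2) by (simp add: Vd_def)
  qed (use assms(3) in simp)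
qed

lemma code_inj_Vd:
  assumes "p \<in> Vd d N" "p' \<in> Vd d N" "code (N + 2) d p = code (N + 2) d p'"
  shows "p = p'"
proof -
  have "\<forall>i<d. p i = p' i"
    using assms by (intro code_inj_aux[of d p "N + 2" p']) (auto simp: Vd_def)
  then show ?thesis using assms(1,2) Vd_eq by blast
qed

lemma rho_inj:
  assumes k: "k \<le> d"
  shows "inj_on (rho (N + 2) d k) (Vd d N)"
proof
  fix p p' assume p: "p \<in> Vd d N" and p': "p' \<in> Vd d N" and eq: "rho (N + 2) d k p = rho (N + 2) d k p'"
  show "p = p'"
  proof (cases "k = 0")
    case True
    then show ?thesis using eq code_inj_Vd[OF p p'] by (simp add: rho_def)
  next
    case False
    define i where "i = k - 1"
    have i: "i < d" using k False by (simp add: i_def)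
    let ?f = "\<lambda>p. p(i := N + 2 - 1 - p i)"
    have b1: "\<forall>t<d. ?f p t < N + 2"
    proof (intro allI impI)
      fix t assume "t < d" then show "?f p t < N + 2" using p by (cases "t = i") (auto simp: Vd_def)
    qed
    have b2: "\<forall>t<d. ?f p' t < N + 2"
    proof (intro allI impI)
      fix t assume "t < d" then show "?f p' t < N + 2" using p' by (cases "t = i") (auto simp: Vd_def)
    qed
    have eqf: "code (N + 2) d (?f p) = code (N + 2) d (?f p')"
      using eq False unfolding rho_def i_def by simp
    have "\<forall>t<d. ?f p t = ?f p' t" by (rule code_inj_aux[OF b1 b2 eqf])
    then have fi: "?f p i = ?f p' i" "\<forall>t<d. t \<noteq> i \<longrightarrow> p t = p' t"
      using i by auto
    have "p i \<le> N" "p' i \<le> N" using p p' i by (auto simp: Vd_def)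
    then have "p i = p' i" using fi(1) by simp
    then have "\<forall>t<d. p t = p' t" using fi(2) by metis
    then show ?thesis using p p' Vd_eq by blast
  qed
qed

lemma rho_lt:
  assumes p: "p \<in> Vd d N" and k: "k \<le> d"
  shows "rho (N + 2) d k p < (N + 2) ^ d"
proof (cases "k = 0")
  case True
  have "\<forall>t<d. p t < N + 2"
  proof (intro allI impI)
    fix t assume "t < d" then show "p t < N + 2" using p by (auto simp: Vd_def)
  qed
  then show ?thesis using True by (simp add: rho_def code_lt)
next
  case False
  define i where "i = k - 1"
  have "\<forall>t<d. (p(i := N + 2 - 1 - p i)) t < N + 2"
  proof (intro allI impI)
    fix t assume "t < d" then show "(p(i := N + 2 - 1 - p i)) t < N + 2" using p by (cases "t = i") (auto simp: Vd_def)
  qed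
  then have "code (N + 2) d (p(i := N + 2 - 1 - p i)) < (N + 2) ^ d" by (rule code_lt)
  then show ?thesis using False by (simp add: rho_def i_def)
qed

lemma corner_in:
  assumes j: "j \<in> Vd d N" and k: "k \<le> d"
  shows "corner j k \<in> Wd d N" "elem (corner j k) k = j"
proof -
  have jb: "1 \<le> j t \<and> j t \<le> N" if "t < d" for t using j that by (auto simp: Vd_def)
  have jz: "j t = 0" if "d \<le> t" for t using j that by (auto simp: Vd_def)
  show "corner j k \<in> Wd d N"
  proof (cases "k = 0")
    case True then show ?thesis using jb jz by (auto simp: Wd_def corner_def)
  next
    case False
    have "(corner j k) t \<le> N" if "t < d" for t
      using jb[OF that] False by (cases "t = k - 1") (auto simp: corner_def)
    moreover have "(corner j k) t = 0" if "d \<le> t" for t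
      using jz[OF that] False k that by (auto simp: corner_def)
    ultimately show ?thesis unfolding Wd_def by blast
  qed
  show "elem (corner j k) k = j"
  proof (cases "k = 0")
    case False
    then have "1 \<le> j (k - 1)" using jb k by simp
    then show ?thesis using False by (simp add: corner_def elem_def fun_eq_iff)
  qed (simp add: corner_def elem_def)
qed

lemma rho_nz: "k \<noteq> 0 \<Longrightarrow> rho B d k p = code B d (p(k - 1 := B - 1 - p (k - 1)))"
  by (simp add: rho_def)

lemma lead_rho:
  assumes j: "j \<in> Vd d N" and k: "k \<le> d" and k': "k' \<le> d" "k' \<noteq> k"
  shows "rho (N + 2) d k j < rho (N + 2) d k (elem (corner j k) k')"
proof (cases "k = 0")
  case True
  then have k'0: "k' \<noteq> 0" using k' by simp
  define i' where "i' = k' - 1"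
  have i': "i' < d" using k' k'0 by (simp add: i'_def)
  have el: "elem (corner j k) k' = j(i' := j i' + 1)"
    using True k'0 by (simp add: corner_def elem_def i'_def)
  have "rho (N + 2) d k (elem (corner j k) k') = code (N + 2) d (j(i' := j i' + 1))"
    using True el by (simp add: rho_def)
  also have "\<dots> = code (N + 2) d (j(i' := 0)) + (j i' + 1) * (N + 2) ^ i'"
    by (rule code_upd0[OF i'])
  also have "code (N + 2) d (j(i' := 0)) = code (N + 2) d j - j i' * (N + 2) ^ i'"
    using code_upd_self[OF i', of "N + 2" j] by simp
  finally have "rho (N + 2) d k (elem (corner j k) k') = code (N + 2) d j + (N + 2) ^ i'"
    using code_upd_self[OF i', of "N + 2" j] by simp
  moreover have "rho (N + 2) d k j = code (N + 2) d j" using True by (simp add: rho_def)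
  ultimately show ?thesis by simp
next
  case False
  define i where "i = k - 1"
  define B where "B = N + 2"
  have i: "i < d" using k False by (simp add: i_def)
  have ji: "1 \<le> j i" "j i \<le> N" using j i by (auto simp: Vd_def)
  have rj: "rho B d k j = code B d (j(i := 0)) + (B - 1 - j i) * B ^ i"
  proof -
    have "rho B d k j = code B d (j(i := B - 1 - j i))" using False by (simp add: rho_nz i_def)
    also have "\<dots> = code B d (j(i := 0)) + (B - 1 - j i) * B ^ i" by (rule code_upd0[OF i])
    finally show ?thesis .
  qed
  show ?thesis
  proof (cases "k' = 0")
    case True
    have el: "elem (corner j k) k' = j(i := j i - 1)"
      using True False by (simp add: corner_def elem_def i_def)
    have "rho B d k (elem (corner j k) k') = code B d ((j(i := j i - 1))(i := B - 1 - (j i - 1)))"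
      using False el by (simp add: rho_nz i_def)
    also have "(j(i := j i - 1))(i := B - 1 - (j i - 1)) = j(i := B - 1 - (j i - 1))" by simp
    also have "code B d (j(i := B - 1 - (j i - 1))) = code B d (j(i := 0)) + (B - 1 - (j i - 1)) * B ^ i"
      by (rule code_upd0[OF i])
    finally have "rho B d k (elem (corner j k) k') = code B d (j(i := 0)) + (B - 1 - (j i - 1)) * B ^ i" .
    moreover have "B - 1 - j i < B - 1 - (j i - 1)" using ji by (simp add: B_def)
    ultimately have "rho B d k j < rho B d k (elem (corner j k) k')" using rj ji by (simp add: B_def)
    then show ?thesis by (simp add: B_def)
  next
    case k'0: False
    define i' where "i' = k' - 1"
    have i': "i' < d" using k' k'0 by (simp add: i'_def)
    have ii': "i' \<noteq> i" using k' False k'0 by (simp add: i_def i'_def)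
    define j1 where "j1 = j(i' := j i' + 1)"
    have el: "elem (corner j k) k' = j1(i := j i - 1)"
      using False k'0 ii' by (simp add: corner_def elem_def i_def i'_def j1_def fun_upd_twist)
    have j1i: "j1 i = j i" using ii' by (simp add: j1_def)
    have "rho B d k (elem (corner j k) k') = code B d ((j1(i := j i - 1))(i := B - 1 - (j i - 1)))"
      using False el by (simp add: rho_nz i_def)
    also have "(j1(i := j i - 1))(i := B - 1 - (j i - 1)) = j1(i := B - 1 - (j i - 1))" by simp
    also have "code B d (j1(i := B - 1 - (j i - 1))) = code B d (j1(i := 0)) + (B - 1 - (j i - 1)) * B ^ i"
      by (rule code_upd0[OF i])
    finally have r1: "rho B d k (elem (corner j k) k') = code B d (j1(i := 0)) + (B - 1 - (j i - 1)) * B ^ i" .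
    have "j1(i := 0) = (j(i := 0))(i' := j i' + 1)"
      using ii' by (simp add: j1_def fun_upd_twist)
    then have "code B d (j1(i := 0)) = code B d ((j(i := 0))(i' := 0)) + (j i' + 1) * B ^ i'"
      using code_upd0[OF i', of B "j(i := 0)" "j i' + 1"] by simp
    moreover have "code B d (j(i := 0)) = code B d ((j(i := 0))(i' := 0)) + j i' * B ^ i'"
      using code_upd_self[OF i', of B "j(i := 0)"] ii' by simp
    ultimately have "code B d (j(i := 0)) < code B d (j1(i := 0))"
      by (simp add: B_def)
    moreover have "B - 1 - j i < B - 1 - (j i - 1)" using ji by (simp add: B_def)
    ultimately have "rho B d k j < rho B d k (elem (corner j k) k')" using rj r1
      by (metis add_less_le_mono less_imp_le_nat mult_le_mono1)
    then show ?thesis by (simp add: B_def)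
  qed
qed


lemma sum_pow2_lt: "(\<Sum>e<n. (2::nat) ^ e) < 2 ^ n"
  by (induction n) auto

lemma sum_pow2_set_lt:
  assumes "finite E" "\<forall>e\<in>E. e < n"
  shows "(\<Sum>e\<in>E. (2::nat) ^ e) < 2 ^ n"
proof -
  have "(\<Sum>e\<in>E. (2::nat) ^ e) \<le> (\<Sum>e<n. 2 ^ e)"
    using assms by (intro sum_mono2) auto
  then show ?thesis using sum_pow2_lt[of n] by linarith
qed

lemma lex_sign:
  fixes f g :: "'a \<Rightarrow> nat" and \<rho> :: "'a \<Rightarrow> nat"
  assumes fin: "finite P" and inj: "inj_on \<rho> P" and bits: "\<forall>p\<in>P. f p \<le> 1 \<and> g p \<le> 1"
    and j: "j \<in> P" "f j \<noteq> g j" and mx: "\<forall>p\<in>P. f p \<noteq> g p \<longrightarrow> \<rho> p \<le> \<rho> j"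
    and ge: "(\<Sum>p\<in>P. g p * 2 ^ \<rho> p) \<le> (\<Sum>p\<in>P. f p * 2 ^ \<rho> p)"
  shows "f j = 1 \<and> g j = 0"
proof (rule ccontr)
  assume "\<not> (f j = 1 \<and> g j = 0)"
  then have fj: "f j = 0" "g j = 1" using bits j by (metis le_eq_less_or_eq less_one)+
  define D where "D = {p \<in> P - {j}. f p \<noteq> g p}"
  have finD: "finite D" using fin by (simp add: D_def)
  have le1: "f p * 2 ^ \<rho> p \<le> g p * 2 ^ \<rho> p + (if p \<in> D then 2 ^ \<rho> p else 0)" if "p \<in> P - {j}" for p
  proof (cases "p \<in> D")
    case True
    then have "f p \<le> 1" using bits that by auto
    then have "f p * 2 ^ \<rho> p \<le> 2 ^ \<rho> p" by simp
    then have "f p * 2 ^ \<rho> p \<le> g p * 2 ^ \<rho> p + 2 ^ \<rho> p" by linarith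
    then show ?thesis using True by simp
  next
    case False
    then have "f p = g p" using that by (auto simp: D_def)
    then show ?thesis using False by simp
  qed
  have "(\<Sum>p\<in>P - {j}. f p * 2 ^ \<rho> p) \<le> (\<Sum>p\<in>P - {j}. g p * 2 ^ \<rho> p + (if p \<in> D then 2 ^ \<rho> p else 0))"
    by (rule sum_mono) (rule le1)
  also have "\<dots> = (\<Sum>p\<in>P - {j}. g p * 2 ^ \<rho> p) + (\<Sum>p\<in>D. 2 ^ \<rho> p)"
    using fin by (simp add: sum.distrib sum.inter_filter[symmetric] D_def)
  also have "(\<Sum>p\<in>D. (2::nat) ^ \<rho> p) = (\<Sum>e\<in>\<rho> ` D. 2 ^ e)"
    using inj by (subst sum.reindex) (auto simp: D_def intro: inj_on_subset)
  also have "(\<Sum>e\<in>\<rho> ` D. (2::nat) ^ e) < 2 ^ \<rho> j"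
  proof (rule sum_pow2_set_lt)
    show "finite (\<rho> ` D)" using finD by simp
    show "\<forall>e\<in>\<rho> ` D. e < \<rho> j"
    proof
      fix e assume "e \<in> \<rho> ` D"
      then obtain p where p: "p \<in> D" "e = \<rho> p" by blast
      then have "\<rho> p \<le> \<rho> j" "p \<noteq> j" "p \<in> P" using mx by (auto simp: D_def)
      moreover have "\<rho> p \<noteq> \<rho> j" using inj p(1) j(1) \<open>p \<noteq> j\<close> \<open>p \<in> P\<close> by (auto dest: inj_onD)
      ultimately show "e < \<rho> j" using p by simp
    qed
  qed
  finally have lt: "(\<Sum>p\<in>P - {j}. f p * 2 ^ \<rho> p) < (\<Sum>p\<in>P - {j}. g p * 2 ^ \<rho> p) + 2 ^ \<rho> j"
    by simp
  have "(\<Sum>p\<in>P. f p * 2 ^ \<rho> p) = f j * 2 ^ \<rho> j + (\<Sum>p\<in>P - {j}. f p * 2 ^ \<rho> p)"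
    using fin j(1) by (simp add: sum.remove)
  moreover have "(\<Sum>p\<in>P. g p * 2 ^ \<rho> p) = g j * 2 ^ \<rho> j + (\<Sum>p\<in>P - {j}. g p * 2 ^ \<rho> p)"
    using fin j(1) by (simp add: sum.remove)
  ultimately have "(\<Sum>p\<in>P. f p * 2 ^ \<rho> p) < (\<Sum>p\<in>P. g p * 2 ^ \<rho> p)"
    using lt fj by simp
  then show False using ge by simp
qed

definition CF :: "nat \<Rightarrow> (nat \<Rightarrow> nat) set \<Rightarrow> (nat \<times> (nat \<Rightarrow> nat) \<Rightarrow> nat) set" where
  "CF M V = box ({0..<M} \<times> V) (\<lambda>_. {0, 1})"

lemma CF_out: assumes "x \<in> CF M V" "z \<notin> {0..<M} \<times> V" shows "x z = 0"
proof -
  have "\<forall>i. i \<notin> {0..<M} \<times> V \<longrightarrow> x i = 0" using assms(1) unfolding CF_def box_def mem_Collect_eq by blast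
  then show ?thesis using assms(2) by blast
qed

lemma CF_in: assumes "x \<in> CF M V" "z \<in> {0..<M} \<times> V" shows "x z \<in> {0, 1}"
proof -
  have "\<forall>i\<in>{0..<M} \<times> V. x i \<in> {0, 1}" using assms(1) unfolding CF_def box_def mem_Collect_eq by (rule conjunct1)
  from this assms(2) show ?thesis by (rule bspec)
qed

lemma CF_le1: "x \<in> CF M V \<Longrightarrow> x z \<le> 1"
  using CF_in[of x M V z] CF_out[of x M V z] by (cases "z \<in> {0..<M} \<times> V") auto

definition Uv :: "nat \<Rightarrow> (nat \<times> (nat \<Rightarrow> nat) \<Rightarrow> nat) \<Rightarrow> (nat \<times> (nat \<Rightarrow> nat)) option \<Rightarrow> int" where
  "Uv m x c = (case c of None \<Rightarrow> 0 | Some (b, w) \<Rightarrow> (\<Sum>k<m. int (k + 1) * int (x (b, elem w k))))"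

definition Phi :: "nat \<Rightarrow> nat \<Rightarrow> nat \<Rightarrow> (nat \<times> (nat \<Rightarrow> nat) \<Rightarrow> nat) \<Rightarrow> nat \<Rightarrow> nat" where
  "Phi N d k x b = (\<Sum>p\<in>Vd d N. x (b, p) * 2 ^ rho (N + 2) d k p)"

lemma block_lead:
  assumes x: "x \<in> CF M (Vd d N)" and x': "x' \<in> CF M (Vd d N)" and b: "b < M" and k: "k \<le> d"
    and dif: "\<exists>p\<in>Vd d N. x (b, p) \<noteq> x' (b, p)"
    and ge: "Phi N d k x' b \<le> Phi N d k x b"
  shows "\<exists>w\<in>Wd d N. Uv (d + 1) x (Some (b, w)) - Uv (d + 1) x' (Some (b, w)) = int (k + 1)"
proof -
  define V where "V = Vd d N"
  define \<rho> where "\<rho> = rho (N + 2) d k"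
  define D where "D = {p \<in> V. x (b, p) \<noteq> x' (b, p)}"
  have finV: "finite V" by (simp add: V_def finite_Vd)
  have finD: "finite D" "D \<noteq> {}" using finV dif by (auto simp: D_def V_def)
  have "\<exists>j. j \<in> D \<and> (\<forall>p\<in>D. \<rho> p \<le> \<rho> j)"
  proof -
    have "Max (\<rho> ` D) \<in> \<rho> ` D" using finD by (intro Max_in) auto
    then obtain j where "j \<in> D" "\<rho> j = Max (\<rho> ` D)" by force
    moreover have "\<forall>p\<in>D. \<rho> p \<le> Max (\<rho> ` D)" using finD by auto
    ultimately show ?thesis by auto
  qed
  then obtain j where jD: "j \<in> D" and jmax: "\<forall>p\<in>D. \<rho> p \<le> \<rho> j" by blast
  have jV: "j \<in> V" using jD by (simp add: D_def)
  have bits: "x (b, j) = 1 \<and> x' (b, j) = 0"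
  proof (rule lex_sign[of V \<rho> "\<lambda>p. x (b, p)" "\<lambda>p. x' (b, p)" j])
    show "finite V" by (rule finV)
    show "inj_on \<rho> V" unfolding \<rho>_def V_def using k by (rule rho_inj)
    show "\<forall>p\<in>V. x (b, p) \<le> 1 \<and> x' (b, p) \<le> 1" using CF_le1[OF x] CF_le1[OF x'] by auto
    show "j \<in> V" by (rule jV)
    show "x (b, j) \<noteq> x' (b, j)" using jD by (simp add: D_def)
    show "\<forall>p\<in>V. x (b, p) \<noteq> x' (b, p) \<longrightarrow> \<rho> p \<le> \<rho> j" using jmax by (auto simp: D_def)
    show "(\<Sum>p\<in>V. x' (b, p) * 2 ^ \<rho> p) \<le> (\<Sum>p\<in>V. x (b, p) * 2 ^ \<rho> p)"
      using ge by (simp add: Phi_def V_def \<rho>_def)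
  qed
  define w where "w = corner j k"
  have wW: "w \<in> Wd d N" and wk: "elem w k = j"
    using corner_in[of j d N k] jV k by (auto simp: w_def V_def)
  have tm: "int (x (b, elem w k')) - int (x' (b, elem w k')) = (if k' = k then 1 else 0)"
    if k': "k' < d + 1" for k'
  proof (cases "k' = k")
    case True then show ?thesis using wk bits by simp
  next
    case False
    show ?thesis
    proof (cases "elem w k' \<in> V")
      case True
      have "\<rho> j < \<rho> (elem w k')"
        unfolding \<rho>_def w_def using lead_rho[of j d N k k'] jV k k' False by (simp add: V_def)
      then have "elem w k' \<notin> D" using jmax by force
      then show ?thesis using True False by (simp add: D_def)
    next
      case notV: False
      then have "x (b, elem w k') = 0" "x' (b, elem w k') = 0"
        using CF_out[OF x] CF_out[OF x'] by (auto simp: V_def)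
      then show ?thesis using False by simp
    qed
  qed
  have "Uv (d + 1) x (Some (b, w)) - Uv (d + 1) x' (Some (b, w)) =
        (\<Sum>k'<d + 1. int (k' + 1) * (int (x (b, elem w k')) - int (x' (b, elem w k'))))"
    by (simp add: Uv_def sum_subtractf right_diff_distrib)
  also have "\<dots> = (\<Sum>k'<d + 1. if k' = k then int (k + 1) else 0)"
    by (rule sum.cong[OF refl]) (simp add: tm)
  also have "\<dots> = int (k + 1)" using k by simp
  finally show ?thesis using wW by blast
qed


lemma fiber_cov:
  assumes x: "x \<in> CF M (Vd d N)" and x': "x' \<in> CF M (Vd d N)" and ne: "x \<noteq> x'" and k: "k \<le> d"
    and eqs: "(\<Sum>b<M. Phi N d k x b) = (\<Sum>b<M. Phi N d k x' b)"
  shows "\<exists>b<M. \<exists>w\<in>Wd d N. Uv (d + 1) x (Some (b, w)) - Uv (d + 1) x' (Some (b, w)) = int (k + 1)"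
proof (rule ccontr)
  assume no: "\<not> ?thesis"
  have strict: "Phi N d k x b < Phi N d k x' b" if b: "b < M" and dif: "\<exists>p\<in>Vd d N. x (b, p) \<noteq> x' (b, p)" for b
  proof (rule ccontr)
    assume "\<not> Phi N d k x b < Phi N d k x' b"
    then have "Phi N d k x' b \<le> Phi N d k x b" by simp
    from block_lead[OF x x' b k dif this] no b show False by blast
  qed
  have le: "Phi N d k x b \<le> Phi N d k x' b" if b: "b \<in> {..<M}" for b
  proof (cases "\<exists>p\<in>Vd d N. x (b, p) \<noteq> x' (b, p)")
    case True then show ?thesis using strict b by fastforce
  next
    case False then show ?thesis unfolding Phi_def by (intro eq_imp_le sum.cong) auto
  qed
  obtain z where z: "x z \<noteq> x' z" using ne by blast
  then have "z \<in> {0..<M} \<times> Vd d N" using CF_out[OF x] CF_out[OF x'] by metis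
  then obtain b p where bp: "z = (b, p)" "b < M" "p \<in> Vd d N" by auto
  then have "Phi N d k x b < Phi N d k x' b" using strict z by blast
  then have "(\<Sum>b<M. Phi N d k x b) < (\<Sum>b<M. Phi N d k x' b)"
    using bp(2) le by (intro sum_strict_mono_ex1) auto
  then show False using eqs by simp
qed

lemma Phi_lt:
  assumes x: "x \<in> CF M (Vd d N)" and k: "k \<le> d"
  shows "Phi N d k x b < 2 ^ ((N + 2) ^ d)"
proof -
  have "Phi N d k x b \<le> (\<Sum>p\<in>Vd d N. 2 ^ rho (N + 2) d k p)"
    unfolding Phi_def using CF_le1[OF x] by (intro sum_mono) (simp add: mult_le_cancel_right1)
  also have "\<dots> = (\<Sum>e\<in>rho (N + 2) d k ` Vd d N. 2 ^ e)"
    using rho_inj[OF k] by (simp add: sum.reindex)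
  also have "\<dots> < 2 ^ ((N + 2) ^ d)"
  proof (rule sum_pow2_set_lt)
    show "finite (rho (N + 2) d k ` Vd d N)" by (simp add: finite_Vd)
    show "\<forall>e\<in>rho (N + 2) d k ` Vd d N. e < (N + 2) ^ d" using rho_lt[OF _ k] by blast
  qed
  finally show ?thesis .
qed

lemma pigeon:
  assumes finX: "finite X" and finK: "finite K" and K: "K \<noteq> {}" and f: "f ` X \<subseteq> K"
  shows "\<exists>t\<in>K. card X \<le> card K * card {x\<in>X. f x = t}"
proof (rule ccontr)
  assume "\<not> ?thesis"
  then have lt: "card K * card {x\<in>X. f x = t} < card X" if "t \<in> K" for t using that by force
  have "X = (\<Union>t\<in>K. {x\<in>X. f x = t})" using f by auto
  moreover have "card (\<Union>t\<in>K. {x\<in>X. f x = t}) = (\<Sum>t\<in>K. card {x\<in>X. f x = t})"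
    using finX finK by (intro card_UN_disjoint) auto
  ultimately have "card X = (\<Sum>t\<in>K. card {x\<in>X. f x = t})" by simp
  then have "card K * card X = (\<Sum>t\<in>K. card K * card {x\<in>X. f x = t})"
    by (simp add: sum_distrib_left)
  also have "\<dots> < (\<Sum>t\<in>K. card X)"
    using finK K lt by (intro sum_strict_mono) auto
  also have "\<dots> = card K * card X" by simp
  finally show False by simp
qed

lemma count_main:
  assumes s2: "2 \<le> s" and M: "1 \<le> M" and q: "M * (N + 1) ^ (s div 2 - 1) + 1 \<le> q"
  shows "2 ^ (M * N ^ (s div 2 - 1)) \<le> R s q * (M * 2 ^ ((N + 2) ^ (s div 2 - 1))) ^ (s div 2)"
proof -
  define d where "d = s div 2 - 1"
  have sd: "s div 2 = d + 1" using s2 by (simp add: d_def)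
  have s_le: "s \<le> 2 * (d + 1) + 1" using sd by presburger
  define V where "V = Vd d N"
  define H :: nat where "H = 2 ^ ((N + 2) ^ d)"
  define X where "X = CF M V"
  define key where "key x = (\<lambda>k. if k \<in> {0..<d + 1} then \<Sum>b<M. Phi N d k x b else 0)" for x
  define K where "K = box {0..<d + 1} (\<lambda>_. {0..<M * H})"
  have finV: "finite V" by (simp add: V_def finite_Vd)
  have finX: "finite X" unfolding X_def CF_def using finV by (intro finite_box) auto
  have cardX: "card X = 2 ^ (M * N ^ d)"
  proof -
    have "card X = (\<Prod>z\<in>{0..<M} \<times> V. card {0::nat, 1})"
      unfolding X_def CF_def using finV by (intro card_box) auto
    also have "\<dots> = 2 ^ card ({0..<M} \<times> V)" by (simp add: numeral_2_eq_2)
    also have "card ({0..<M} \<times> V) = M * N ^ d" by (simp add: card_cartesian_product V_def card_Vd)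
    finally show ?thesis .
  qed
  have finK: "finite K" unfolding K_def by (intro finite_box) auto
  have cardK: "card K = (M * H) ^ (d + 1)" unfolding K_def by (simp add: card_box)
  have H1: "1 \<le> H" by (simp add: H_def)
  have K0: "(\<lambda>_. 0) \<in> K" using M H1 unfolding K_def box_def by (auto simp: less_le_trans[of 0 1])
  then have Kne: "K \<noteq> {}" by blast
  have keyK: "key ` X \<subseteq> K"
  proof
    fix y assume "y \<in> key ` X"
    then obtain x where x: "x \<in> X" "y = key x" by blast
    have "(\<Sum>b<M. Phi N d k x b) < M * H" if "k < d + 1" for k
    proof -
      have "0 \<in> {..<M}" using M by simp
      then have Mne: "{..<M} \<noteq> {}" by blast
      have "(\<Sum>b<M. Phi N d k x b) < (\<Sum>b<M. H)"
        using Mne x that Phi_lt[of x M d N k] by (intro sum_strict_mono) (auto simp: X_def V_def H_def)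
      then show ?thesis by simp
    qed
    then show "y \<in> K" unfolding K_def box_def x(2) key_def by auto
  qed
  obtain t where t: "t \<in> K" and big: "card X \<le> card K * card {x\<in>X. key x = t}"
    using pigeon[OF finX finK Kne keyK] by blast
  define A where "A = {x\<in>X. key x = t}"
  define C where "C = insert None (Some ` ({0..<M} \<times> Wd d N))"
  have finC: "finite C" by (simp add: C_def finite_Wd)
  have cardC: "card C = M * (N + 1) ^ d + 1"
  proof -
    have "card (Some ` ({0..<M} \<times> Wd d N)) = M * (N + 1) ^ d"
      by (simp add: card_image card_cartesian_product card_Wd)
    then show ?thesis unfolding C_def using finite_Wd[of d N] by (simp add: card_insert_disjoint)
  qed
  have cov: "\<exists>c\<in>C. (Uv (d + 1) x c - Uv (d + 1) x' c) mod int s = int a"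
    if xA: "x \<in> A" "x' \<in> A" "x \<noteq> x'" "a < s" for x x' a
  proof -
    have xX: "x \<in> CF M (Vd d N)" "x' \<in> CF M (Vd d N)" using xA by (auto simp: A_def X_def V_def)
    have eqk: "(\<Sum>b<M. Phi N d k x b) = (\<Sum>b<M. Phi N d k x' b)" if "k \<le> d" for k
    proof -
      have "key x k = key x' k" using xA by (simp add: A_def)
      then show ?thesis using that by (simp add: key_def)
    qed
    consider "a = 0" | "1 \<le> a \<and> a \<le> d + 1" | "d + 1 < a" by linarith
    then show ?thesis
    proof cases
      case 1
      then show ?thesis by (intro bexI[of _ None]) (auto simp: C_def Uv_def)
    next
      case 2
      then have k: "a - 1 \<le> d" by linarith
      obtain b w where bw: "b < M" "w \<in> Wd d N"
        "Uv (d + 1) x (Some (b, w)) - Uv (d + 1) x' (Some (b, w)) = int (a - 1 + 1)"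
        using fiber_cov[OF xX(1) xX(2) xA(3) k eqk[OF k]] by blast
      have "int (a - 1 + 1) mod int s = int a" using 2 xA(4) by simp
      then show ?thesis using bw by (intro bexI[of _ "Some (b, w)"]) (auto simp: C_def)
    next
      case 3
      define a' where "a' = s - a"
      have a': "1 \<le> a'" "a' \<le> d + 1" using 3 xA(4) s_le by (auto simp: a'_def)
      then have k: "a' - 1 \<le> d" by linarith
      obtain b w where bw: "b < M" "w \<in> Wd d N"
        "Uv (d + 1) x' (Some (b, w)) - Uv (d + 1) x (Some (b, w)) = int (a' - 1 + 1)"
        using fiber_cov[OF xX(2) xX(1) xA(3)[symmetric] k eqk[OF k, symmetric]] by blast
      then have "Uv (d + 1) x (Some (b, w)) - Uv (d + 1) x' (Some (b, w)) = int a - int s"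
        using a' xA(4) by (simp add: a'_def of_nat_diff)
      moreover have "(int a - int s) mod int s = int a" using xA(4) by (simp add: minus_mod_self2 flip: of_nat_mod)
      ultimately show ?thesis using bw by (intro bexI[of _ "Some (b, w)"]) (auto simp: C_def)
    qed
  qed
  have finA: "finite A" using finX by (simp add: A_def)
  have "card A \<le> R s q"
    by (rule transfer[OF s2 finC _ finA cov]) (use q cardC d_def in simp)
  then have cx: "card X \<le> card K * R s q" using big by (simp add: A_def order_trans)
  have ineq0: "2 ^ (M * N ^ d) \<le> (M * H) ^ (d + 1) * R s q" using cx by (simp only: cardX cardK)
  then have ineq: "2 ^ (M * N ^ d) \<le> R s q * (M * H) ^ (d + 1)" by (simp only: mult.commute)
  have e1: "s div 2 - 1 = d" by (simp add: d_def)
  have e2: "d + 1 - 1 = d" by simp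
  show ?thesis using ineq unfolding H_def by (simp only: e1 sd e2)
qed


lemma poly_exp:
  fixes \<rho> c :: real
  assumes r: "1 < \<rho>" and c: "0 \<le> c"
  shows "\<exists>M0. \<forall>M\<ge>M0. c * real M ^ m \<le> \<rho> ^ M"
proof -
  define l where "l = ln \<rho>"
  have l: "0 < l" using r by (simp add: l_def)
  have g: "filterlim (\<lambda>M. real M * l) at_top sequentially"
    by (rule filterlim_at_top_mult_tendsto_pos[OF tendsto_const l filterlim_real_sequentially])
  have lim: "(\<lambda>M. (real M * l) ^ m / exp (real M * l)) \<longlonglongrightarrow> 0"
    by (rule filterlim_compose[OF tendsto_power_div_exp_0 g])
  have pos: "0 < l ^ m / (c + 1)" using l c by simp
  have "eventually (\<lambda>M. (real M * l) ^ m / exp (real M * l) < l ^ m / (c + 1)) sequentially"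
    using order_tendstoD(2)[OF lim pos] .
  then obtain M0 where M0: "\<And>M. M \<ge> M0 \<Longrightarrow> (real M * l) ^ m / exp (real M * l) < l ^ m / (c + 1)"
    unfolding eventually_sequentially by blast
  have "c * real M ^ m \<le> \<rho> ^ M" if M: "M \<ge> M0" for M
  proof -
    have r0: "0 < \<rho>" using r by simp
    have e: "exp (real M * l) = \<rho> ^ M"
      using r0 by (simp add: l_def exp_of_nat_mult)
    have rp: "0 < \<rho> ^ M" using r by simp
    have "(real M * l) ^ m / \<rho> ^ M < l ^ m / (c + 1)" using M0[OF M] e by simp
    then have "real M ^ m * l ^ m * (c + 1) < l ^ m * \<rho> ^ M"
      using rp c by (simp add: field_simps power_mult_distrib)
    then have "(real M ^ m * (c + 1)) * l ^ m < \<rho> ^ M * l ^ m" by (simp add: algebra_simps)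
    then have "real M ^ m * (c + 1) < \<rho> ^ M" using l by (simp add: mult_less_cancel_right)
    moreover have "c * real M ^ m \<le> real M ^ m * (c + 1)" by (simp add: algebra_simps)
    ultimately show ?thesis by simp
  qed
  then show ?thesis by blast
qed

lemma exists_N:
  fixes \<beta> :: real
  assumes b: "1 < \<beta>" "\<beta> < 2"
  shows "\<exists>N\<ge>1. \<beta> ^ ((N + 1) ^ d) < 2 ^ (N ^ d)"
proof -
  define lam where "lam = ln 2 / ln \<beta>"
  have lb: "0 < ln \<beta>" "ln \<beta> < ln 2" using b by auto
  have lam: "1 < lam" using lb by (simp add: lam_def)
  have "(\<lambda>N. (real (Suc N) / real N) ^ d) \<longlonglongrightarrow> 1 ^ d"
    by (intro tendsto_power LIMSEQ_Suc_n_over_n)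
  then have "eventually (\<lambda>N. (real (Suc N) / real N) ^ d < lam) sequentially"
    using lam by (intro order_tendstoD(2)) auto
  then obtain N0 where N0: "\<And>N. N \<ge> N0 \<Longrightarrow> (real (Suc N) / real N) ^ d < lam"
    unfolding eventually_sequentially by blast
  define N where "N = max N0 1"
  have N1: "1 \<le> N" and "N \<ge> N0" by (auto simp: N_def)
  then have "(real (Suc N) / real N) ^ d < lam" using N0 by blast
  then have "real (Suc N) ^ d / real N ^ d < ln 2 / ln \<beta>" by (simp add: power_divide lam_def)
  then have "real (Suc N) ^ d * ln \<beta> < ln 2 * real N ^ d"
    using N1 lb by (simp add: field_simps)
  then have "real ((N + 1) ^ d) * ln \<beta> < real (N ^ d) * ln 2"
    by (simp add: mult.commute add.commute)
  then have "exp (real ((N + 1) ^ d) * ln \<beta>) < exp (real (N ^ d) * ln 2)" by simp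
  moreover have "exp (real ((N + 1) ^ d) * ln \<beta>) = \<beta> ^ ((N + 1) ^ d)"
    using b by (simp only: exp_of_nat_mult) simp
  moreover have "exp (real (N ^ d) * ln 2) = (2::real) ^ (N ^ d)"
    by (simp only: exp_of_nat_mult) simp
  ultimately have "\<beta> ^ ((N + 1) ^ d) < 2 ^ (N ^ d)" by metis
  then show ?thesis using N1 by blast
qed

lemma div_bound:
  assumes "0 < (L::nat)" shows "n < (n div L + 1) * L"
proof -
  have e: "n div L * L + n mod L = n" by (rule div_mult_mod_eq)
  have "n mod L < L" using assms by simp
  then have "n < n div L * L + L" using e by linarith
  then show ?thesis by (simp add: algebra_simps)
qed

lemma part3:
  assumes s2: "2 \<le> s" and dl: "0 < \<delta>" "\<delta> < 2"
  shows "\<exists>q0. \<forall>q\<ge>q0. real (R s q) \<ge> (2 - \<delta>) ^ q"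
proof (cases "2 - \<delta> \<le> 1")
  case True
  have "(2 - \<delta>) ^ q \<le> real (R s q)" for q
  proof -
    have "(2 - \<delta>) ^ q \<le> 1" using True dl by (intro power_le_one) auto
    also have "1 \<le> real (R s q)" using R_ge1[of s q] s2 by simp
    finally show ?thesis .
  qed
  then show ?thesis by blast
next
  case False
  define \<beta> where "\<beta> = 2 - \<delta>"
  have b: "1 < \<beta>" "\<beta> < 2" using False dl by (auto simp: \<beta>_def)
  define d where "d = s div 2 - 1"
  define m where "m = s div 2"
  obtain N where N1: "1 \<le> N" and NB: "\<beta> ^ ((N + 1) ^ d) < 2 ^ (N ^ d)" using exists_N[OF b] by blast
  define L where "L = (N + 1) ^ d"
  define V where "V = N ^ d"
  define H :: nat where "H = 2 ^ ((N + 2) ^ d)"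
  have L1: "0 < L" by (simp add: L_def)
  have bL: "0 < \<beta> ^ L" using b by simp
  define \<rho> where "\<rho> = 2 ^ V / \<beta> ^ L"
  have \<rho>1: "1 < \<rho>" using NB bL by (simp add: \<rho>_def L_def V_def)
  have b0: "\<beta> \<noteq> 0" using b by simp
  have \<rho>b: "\<rho> * \<beta> ^ L = 2 ^ V" using b0 unfolding \<rho>_def by simp
  define c where "c = \<beta> ^ L * real H ^ m"
  have c0: "0 \<le> c" using bL by (simp add: c_def)
  obtain M0 where M0: "\<And>M. M \<ge> M0 \<Longrightarrow> c * real M ^ m \<le> \<rho> ^ M"
    using poly_exp[OF \<rho>1 c0, of m] by blast
  define M1 where "M1 = max M0 1"
  define q0 where "q0 = (M1 + 1) * L + 1"
  have "\<beta> ^ q \<le> real (R s q)" if q: "q \<ge> q0" for q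
  proof -
    define M where "M = (q - 1) div L"
    have "(M1 + 1) * L \<le> q - 1" using q by (simp add: q0_def)
    then have "(M1 + 1) * L div L \<le> (q - 1) div L" by (rule div_le_mono)
    then have MM1: "M1 + 1 \<le> M" using L1 by (simp add: M_def)
    then have Mge: "M \<ge> M0" "1 \<le> M" by (auto simp: M1_def)
    have qa: "M * L + 1 \<le> q"
    proof -
      have "M * L \<le> q - 1" unfolding M_def by (rule div_times_less_eq_dividend)
      moreover have "1 \<le> q" using q by (simp add: q0_def)
      ultimately show ?thesis by simp
    qed
    have qb: "q \<le> (M + 1) * L"
    proof -
      have "q - 1 < (M + 1) * L" unfolding M_def using div_bound[OF L1] by blast
      then show ?thesis by simp
    qed
    have e1: "s div 2 - 1 = d" by (simp add: d_def)
    have e2: "s div 2 = m" by (simp add: m_def)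
    note cm = count_main[OF s2 Mge(2), of N q, unfolded e1, unfolded e2]
    have cnt: "2 ^ (M * V) \<le> R s q * (M * H) ^ m"
      using cm qa unfolding L_def V_def H_def by simp
    then have "real (2 ^ (M * V)) \<le> real (R s q * (M * H) ^ m)"
      by (simp only: of_nat_le_iff)
    then have cntr: "(2::real) ^ (M * V) \<le> real (R s q) * (real M * real H) ^ m"
      by simp
    have A: "c * real M ^ m \<le> \<rho> ^ M" using M0 Mge(1) by blast
    have "\<beta> ^ L * (\<beta> ^ L) ^ M * (real M ^ m * real H ^ m) = (c * real M ^ m) * (\<beta> ^ L) ^ M"
      by (simp only: c_def mult_ac)
    also have "\<dots> \<le> \<rho> ^ M * (\<beta> ^ L) ^ M"
      using A bL by (intro mult_right_mono) auto
    also have "\<dots> = (2 ^ V) ^ M" by (simp only: power_mult_distrib[symmetric] \<rho>b)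
    also have "\<dots> = 2 ^ (V * M)" by (rule power_mult[symmetric])
    also have "(2::real) ^ (V * M) = 2 ^ (M * V)" by (subst mult.commute) (rule refl)
    also have "\<dots> \<le> real (R s q) * (real M ^ m * real H ^ m)"
      using cntr by (simp only: power_mult_distrib)
    finally have le: "\<beta> ^ L * (\<beta> ^ L) ^ M * (real M ^ m * real H ^ m) \<le> real (R s q) * (real M ^ m * real H ^ m)" .
    have pos: "0 < real M ^ m * real H ^ m" using Mge(2) by (simp add: H_def)
    have h1: "\<beta> ^ L * (\<beta> ^ L) ^ M \<le> real (R s q)"
      using le pos by (rule mult_right_le_imp_le)
    have h2: "\<beta> ^ q \<le> \<beta> ^ ((M + 1) * L)"
      using qb b by (intro power_increasing) auto
    have h3: "\<beta> ^ ((M + 1) * L) = \<beta> ^ L * (\<beta> ^ L) ^ M"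
    proof -
      have "(M + 1) * L = L + L * M" by simp
      then have "\<beta> ^ ((M + 1) * L) = \<beta> ^ (L + L * M)" by (simp only:)
      also have "\<dots> = \<beta> ^ L * (\<beta> ^ L) ^ M" by (simp only: power_add power_mult)
      finally show ?thesis .
    qed
    have "\<beta> ^ q \<le> \<beta> ^ L * (\<beta> ^ L) ^ M" using h2 unfolding h3 .
    then show ?thesis using h1 by (rule order_trans)
  qed
  then have "\<forall>q\<ge>q0. \<beta> ^ q \<le> real (R s q)" by blast
  then show ?thesis unfolding \<beta>_def by (intro exI[of _ q0])
qed

lemma R2_lower:
  assumes q: "1 \<le> q"
  shows "2 ^ (q - 1) \<le> R 2 q"
proof -
  define F where "F = box {1..<q} (\<lambda>_. {0..<2::nat})"
  have Fv: "F \<subseteq> vecs 2 q" by (auto simp: F_def box_def vecs_def)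
  have F0: "v 0 = 0" if "v \<in> F" for v using that by (auto simp: F_def box_def)
  have Fb: "v i < 2" if "v \<in> F" for v i
    using that by (cases "i \<in> {1..<q}") (auto simp: F_def box_def)
  have Fz: "v i = 0" if "v \<in> F" "q \<le> i" for v i
    using that by (auto simp: F_def box_def)
  have cov: "A_covering {0..<2} q (vdiff 2 u v)" if uv: "u \<in> F" "v \<in> F" "u \<noteq> v" for u v
    unfolding A_covering_def
  proof
    fix a :: nat assume "a \<in> {0..<2}"
    then have "a = 0 \<or> a = 1" by auto
    then show "\<exists>i<q. vdiff 2 u v i = a"
    proof
      assume "a = 0"
      then show ?thesis using q F0[OF uv(1)] F0[OF uv(2)] by (intro exI[of _ 0]) (auto simp: vdiff_def)
    next
      assume a1: "a = 1"
      obtain i where i: "u i \<noteq> v i" using uv(3) by blast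
      have iq: "i < q"
      proof (rule ccontr)
        assume "\<not> i < q"
        then show False using Fz[OF uv(1)] Fz[OF uv(2)] i by simp
      qed
      have "u i < 2" "v i < 2" using Fb uv by auto
      then have "(u i = 1 \<and> v i = 0) \<or> (u i = 0 \<and> v i = 1)" using i by auto
      then have "vdiff 2 u v i = 1" by (auto simp: vdiff_def)
      then show ?thesis using iq a1 by blast
    qed
  qed
  have "covering_family 2 q F" unfolding covering_family_def using Fv cov by blast
  then have "card F \<le> R 2 q" by (rule R_ge)
  moreover have "card F = 2 ^ (q - 1)" by (simp add: F_def card_box)
  ultimately show ?thesis by simp
qed

theorem theorem1p3:
  shows "(\<forall>s q. 2 \<le> s \<and> s \<le> q \<longrightarrow> R s q \<le> 2 ^ (q - 1))
       \<and> (\<forall>q\<ge>2. R 2 q = 2 ^ (q - 1))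
       \<and> (\<forall>s\<ge>2. \<forall>\<delta>::real. 0 < \<delta> \<and> \<delta> < 2 \<longrightarrow>
            (\<exists>q0. \<forall>q\<ge>q0. real (R s q) \<ge> (2 - \<delta>) ^ q))"
proof (intro conjI allI impI)
  fix s q :: nat assume "2 \<le> s \<and> s \<le> q"
  then show "R s q \<le> 2 ^ (q - 1)" using R_upper by simp
next
  fix q :: nat assume "2 \<le> q"
  then show "R 2 q = 2 ^ (q - 1)" using R_upper[of 2 q] R2_lower[of q] by simp
next
  fix s :: nat and \<delta> :: real assume "2 \<le> s" "0 < \<delta> \<and> \<delta> < 2"
  then show "\<exists>q0. \<forall>q\<ge>q0. real (R s q) \<ge> (2 - \<delta>) ^ q" using part3 by blast
qed

end
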